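(* Every financial system with payment priorities (as defined in the context, for any number $P\ge 1$ of priority levels) has at least one solution, i.e. there exists $r\in[0,1]^V$ such that for every bank $v\in V$: $r_v=1$ if $a_v(r)\ge l_v(r)$, and $r_v=a_v(r)/l_v(r)$ if $a_v(r)<l_v(r)$.
   Context: A financial system with payment priorities consists of: a finite set $V$ of banks; external assets $e_v\ge 0$ for each $v\in V$; a number $P\ge 1$ of priority levels; and a finite set of contracts, each of which is either a debt contract from a debtor $u$ to a creditor $v\neq u$ with weight $c>0$, or a credit default swap (CDS) from a debtor $u$ to a creditor $v\neq u$ in reference to a bank $w\notin\{u,v\}$ (the reference entity) with weight $c>0$. Every contract has a priority in $\{1,\dots,P\}$ (1 is the highest priority). It is assumed that every bank that is the reference entity of some CDS is the debtor of at least one debt contract of positive weight. Given a recovery rate vector $r\in[0,1]^V$: the liability of a contract $k$ is $l_k(r)=c$ if $k$ is a debt of weight $c$, and $l_k(r)=c\,(1-r_w)$ if $k$ is a CDS of weight $c$ in reference to $w$. For a bank $v$, $l_v(r)$ is the sum of the liabilities of the contracts with debtor $v$; $l_v^{(\rho)}(r)$ is the sum of the liabilities of contracts with debtor $v$ and priority $\rho$; and $l_v^{(\le\rho)}(r)=\sum_{i=1}^{\rho}l_v^{(i)}(r)$ (with $l_v^{(\le 0)}=0$). The payment on a contract $k$ with debtor $v$ and priority $\rho$ is $p_k(r)=l_k(r)\cdot\min\{1,\max\{0,(r_v l_v(r)-l_v^{(\le\rho-1)}(r))/l_v^{(\rho)}(r)\}\}$ (and $p_k(r)=0$ if $l_v^{(\rho)}(r)=0$);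 i.e. the amount $r_v l_v(r)$ paid out by $v$ covers liabilities level by level in order of priority, proportionally to liabilities within a level. The assets of $v$ are $a_v(r)=e_v+\sum_k p_k(r)$, summing over contracts $k$ with creditor $v$. A vector $r\in[0,1]^V$ is a solution (clearing vector) if for every $v\in V$: $r_v=1$ when $a_v(r)\ge l_v(r)$, and $r_v=a_v(r)/l_v(r)$ when $a_v(r)<l_v(r)$. The payoff of $v$ is $q_v(r)=\max\{a_v(r)-l_v(r),0\}$. When $P=1$, payments reduce to $p_k(r)=r_v\,l_k(r)$ (principle of proportionality); this is called the base model. *)

theory Defs
  imports Complex_Main
begin

text \<open>A contract is either a debt contract (debtor, creditor, weight, priority)
  or a CDS (debtor, creditor, reference entity, weight, priority).
  The contracts of a system form a finite list (so that several contracts with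
  identical data are allowed).\<close>

datatype 'b contract =
    Debt 'b 'b real nat
  | CDS 'b 'b 'b real nat

fun debtor :: "'b contract \<Rightarrow> 'b" where
  "debtor (Debt u v c p) = u"
| "debtor (CDS u v w c p) = u"

fun creditor :: "'b contract \<Rightarrow> 'b" where
  "creditor (Debt u v c p) = v"
| "creditor (CDS u v w c p) = v"

fun cweight :: "'b contract \<Rightarrow> real" where
  "cweight (Debt u v c p) = c"
| "cweight (CDS u v w c p) = c"

fun prio :: "'b contract \<Rightarrow> nat" where
  "prio (Debt u v c p) = p"
| "prio (CDS u v w c p) = p"

definition wf_system :: "'b set \<Rightarrow> ('b \<Rightarrow> real) \<Rightarrow> nat \<Rightarrow> 'b contract list \<Rightarrow> bool" where
  "wf_system V e P cs \<longleftrightarrow>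
     finite V \<and> (\<forall>v\<in>V. e v \<ge> 0) \<and> P \<ge> 1 \<and>
     (\<forall>k\<in>set cs. debtor k \<in> V \<and> creditor k \<in> V \<and> debtor k \<noteq> creditor k \<and>
        cweight k > 0 \<and> 1 \<le> prio k \<and> prio k \<le> P) \<and>
     (\<forall>u v w c p. CDS u v w c p \<in> set cs \<longrightarrow> w \<in> V \<and> w \<noteq> u \<and> w \<noteq> v \<and>
        (\<exists>v' c' p'. Debt w v' c' p' \<in> set cs \<and> c' > 0))"

fun liab :: "'b contract \<Rightarrow> ('b \<Rightarrow> real) \<Rightarrow> real" where
  "liab (Debt u v c p) r = c"
| "liab (CDS u v w c p) r = c * (1 - r w)"

definition bank_liab :: "'b contract list \<Rightarrow> 'b \<Rightarrow> ('b \<Rightarrow> real) \<Rightarrow> real" where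
  "bank_liab cs v r = sum_list (map (\<lambda>k. if debtor k = v then liab k r else 0) cs)"

definition bank_liab_prio :: "'b contract list \<Rightarrow> 'b \<Rightarrow> nat \<Rightarrow> ('b \<Rightarrow> real) \<Rightarrow> real" where
  "bank_liab_prio cs v \<rho> r =
     sum_list (map (\<lambda>k. if debtor k = v \<and> prio k = \<rho> then liab k r else 0) cs)"

definition bank_liab_upto :: "'b contract list \<Rightarrow> 'b \<Rightarrow> nat \<Rightarrow> ('b \<Rightarrow> real) \<Rightarrow> real" where
  "bank_liab_upto cs v \<rho> r = (\<Sum>i=1..\<rho>. bank_liab_prio cs v i r)"

definition payment :: "'b contract list \<Rightarrow> 'b contract \<Rightarrow> ('b \<Rightarrow> real) \<Rightarrow> real" where
  "payment cs k r =
     (let v = debtor k; \<rho> = prio k; L = bank_liab_prio cs v \<rho> r in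
      if L = 0 then 0
      else liab k r * min 1 (max 0 ((r v * bank_liab cs v r - bank_liab_upto cs v (\<rho> - 1) r) / L)))"

definition assets :: "('b \<Rightarrow> real) \<Rightarrow> 'b contract list \<Rightarrow> 'b \<Rightarrow> ('b \<Rightarrow> real) \<Rightarrow> real" where
  "assets e cs v r = e v + sum_list (map (\<lambda>k. if creditor k = v then payment cs k r else 0) cs)"

definition is_solution :: "'b set \<Rightarrow> ('b \<Rightarrow> real) \<Rightarrow> 'b contract list \<Rightarrow> ('b \<Rightarrow> real) \<Rightarrow> bool" where
  "is_solution V e cs r \<longleftrightarrow>
     (\<forall>v\<in>V. 0 \<le> r v \<and> r v \<le> 1) \<and>
     (\<forall>v\<in>V. (assets e cs v r \<ge> bank_liab cs v r \<longrightarrow> r v = 1) \<and>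
            (assets e cs v r < bank_liab cs v r \<longrightarrow> r v = assets e cs v r / bank_liab cs v r))"

end

theory Submission
  imports Defs "HOL-Analysis.Analysis"
begin


lemma tendsto_fun_coord:
  fixes y :: "nat \<Rightarrow> nat \<Rightarrow> real"
  assumes "\<And>i. (\<lambda>k. y k i) \<longlonglongrightarrow> z i"
  shows "y \<longlonglongrightarrow> z"
proof -
  have "limitin (product_topology (\<lambda>_. euclidean) UNIV) y z sequentially"
    using assms by (simp add: limitin_componentwise)
  then show ?thesis by (simp add: euclidean_product_topology)
qed

lemma bw_finite:
  fixes z :: "nat \<Rightarrow> nat \<Rightarrow> real"
  assumes "\<And>k i. \<bar>z k i\<bar> \<le> 1"
  shows "\<exists>\<sigma>. strict_mono \<sigma> \<and> (\<forall>i<n. convergent (\<lambda>k. z (\<sigma> k) i))"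
proof (induction n)
  case 0
  then show ?case by (auto intro: strict_mono_id)
next
  case (Suc n)
  then obtain \<sigma> where s: "strict_mono \<sigma>" "\<forall>i<n. convergent (\<lambda>k. z (\<sigma> k) i)" by blast
  have "bounded (range (\<lambda>k. z (\<sigma> k) n))"
    using assms by (auto simp: bounded_iff)
  then obtain l \<tau> where t: "strict_mono \<tau>" "((\<lambda>k. z (\<sigma> k) n) \<circ> \<tau>) \<longlonglongrightarrow> l"
    using bounded_imp_convergent_subsequence by blast
  have "strict_mono (\<sigma> \<circ> \<tau>)" using s t by (simp add: strict_mono_o)
  moreover have "\<forall>i<Suc n. convergent (\<lambda>k. z ((\<sigma> \<circ> \<tau>) k) i)"
  proof (intro allI impI)
    fix i assume "i < Suc n"
    show "convergent (\<lambda>k. z ((\<sigma> \<circ> \<tau>) k) i)"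
    proof (cases "i = n")
      case True
      then show ?thesis using t by (auto simp: convergent_def o_def)
    next
      case False
      then have "i < n" using \<open>i < Suc n\<close> by simp
      then obtain L where "(\<lambda>k. z (\<sigma> k) i) \<longlonglongrightarrow> L" using s convergent_def by blast
      from LIMSEQ_subseq_LIMSEQ[OF this t(1)] show ?thesis by (auto simp: convergent_def o_def)
    qed
  qed
  ultimately show ?case by blast
qed

definition cube :: "nat \<Rightarrow> (nat \<Rightarrow> real) set" where
  "cube n = {x. (\<forall>i<n. 0 \<le> x i \<and> x i \<le> 1) \<and> (\<forall>i. n \<le> i \<longrightarrow> x i = 0)}"

lemma brouwer_nat:
  fixes F :: "(nat \<Rightarrow> real) \<Rightarrow> (nat \<Rightarrow> real)"
  assumes cont: "\<And>i. i < n \<Longrightarrow> continuous_on (cube n) (\<lambda>x. F x i)"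
    and into: "\<And>x. x \<in> cube n \<Longrightarrow> F x \<in> cube n"
  shows "\<exists>x\<in>cube n. F x = x"
proof -
  have h1: "\<forall>x. x \<in> cube n \<longrightarrow> F x \<in> cube n" using into by blast
  have h2: "\<forall>x. x \<in> cube n \<longrightarrow> (\<forall>i. i < n \<longrightarrow> 0 \<le> x i \<and> x i \<le> 1)" by (simp add: cube_def)
  obtain l where l1: "\<forall>x i. l x i \<le> (1::nat)"
    and l2: "\<forall>x i. x \<in> cube n \<and> i < n \<and> x i = 0 \<longrightarrow> l x i = 0"
    and l3: "\<forall>x i. x \<in> cube n \<and> i < n \<and> x i = 1 \<longrightarrow> l x i = 1"
    and l4: "\<forall>x i. x \<in> cube n \<and> i < n \<and> l x i = 0 \<longrightarrow> x i \<le> F x i"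
    and l5: "\<forall>x i. x \<in> cube n \<and> i < n \<and> l x i = 1 \<longrightarrow> F x i \<le> x i"
    using kuhn_labelling_lemma'[of "\<lambda>x. x \<in> cube n" F "\<lambda>i. i < n", OF h1 h2] by blast
  note l = l1 l2 l3 l4 l5
  define g :: "nat \<Rightarrow> (nat \<Rightarrow> nat) \<Rightarrow> nat \<Rightarrow> real" where
    "g p y = (\<lambda>j. if j < n then real (y j) / real p else 0)" for p y
  have g_cube: "g p y \<in> cube n" if "\<forall>i<n. y i \<le> p" "p > 0" for p y
    using that by (auto simp: g_def cube_def divide_le_eq_1)
  have kuhn: "\<forall>k. \<exists>q. (\<forall>i<n. q i < Suc k) \<and> (\<forall>i<n. \<exists>r s. (\<forall>j<n. q j \<le> r j \<and> r j \<le> q j + 1) \<and>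
      (\<forall>j<n. q j \<le> s j \<and> s j \<le> q j + 1) \<and> l (g (Suc k) r) i \<noteq> l (g (Suc k) s) i)"
  proof
    fix k
    let ?p = "Suc k"
    have a1: "\<forall>x. (\<forall>i<n. x i \<le> ?p) \<longrightarrow> (\<forall>i<n. l (g ?p x) i = 0 \<or> l (g ?p x) i = 1)"
    proof (intro allI impI)
      fix x i
      have "l (g ?p x) i \<le> 1" using l1 by blast
      then show "l (g ?p x) i = 0 \<or> l (g ?p x) i = 1" by linarith
    qed
    have a2: "\<forall>x. (\<forall>i<n. x i \<le> ?p) \<longrightarrow> (\<forall>i<n. x i = 0 \<longrightarrow> l (g ?p x) i = 0)"
      using l(2) g_cube by (auto simp: g_def)
    have a3: "\<forall>x. (\<forall>i<n. x i \<le> ?p) \<longrightarrow> (\<forall>i<n. x i = ?p \<longrightarrow> l (g ?p x) i = 1)"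
    proof (intro allI impI)
      fix x i assume "\<forall>i<n. x i \<le> ?p" "i < n" "x i = ?p"
      then show "l (g ?p x) i = 1" using l(3) g_cube[of x ?p]
        by (auto simp: g_def simp del: of_nat_Suc)
    qed
    obtain q where "\<forall>i<n. q i < ?p"
      "\<forall>i<n. \<exists>r s. (\<forall>j<n. q j \<le> r j \<and> r j \<le> q j + 1) \<and> (\<forall>j<n. q j \<le> s j \<and> s j \<le> q j + 1) \<and> l (g ?p r) i \<noteq> l (g ?p s) i"
      by (rule kuhn_lemma[of ?p n "\<lambda>x i. l (g ?p x) i", OF _ a1 a2 a3]) simp
    then show "\<exists>q. (\<forall>i<n. q i < Suc k) \<and> (\<forall>i<n. \<exists>r s. (\<forall>j<n. q j \<le> r j \<and> r j \<le> q j + 1) \<and>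
      (\<forall>j<n. q j \<le> s j \<and> s j \<le> q j + 1) \<and> l (g (Suc k) r) i \<noteq> l (g (Suc k) s) i)" by blast
  qed
  from choice[OF kuhn] obtain Q where Q0: "\<forall>k. (\<forall>i<n. Q k i < Suc k) \<and> (\<forall>i<n. \<exists>r s. (\<forall>j<n. Q k j \<le> r j \<and> r j \<le> Q k j + 1) \<and>
      (\<forall>j<n. Q k j \<le> s j \<and> s j \<le> Q k j + 1) \<and> l (g (Suc (k)) r) i \<noteq> l (g (Suc (k)) s) i)"
    by (elim exE) (rule that, assumption)
  note Q = Q0[rule_format]
  define Phi where "Phi k i r s \<longleftrightarrow> (\<forall>j<n. Q k j \<le> r j \<and> r j \<le> Q k j + 1) \<and>
      (\<forall>j<n. Q k j \<le> s j \<and> s j \<le> Q k j + 1) \<and> l (g (Suc k) r) i \<noteq> l (g (Suc k) s) i" for k i r s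
  have step: "\<exists>rs. i < n \<longrightarrow> Phi k i (fst rs) (snd rs)" for k i
  proof (cases "i < n")
    case True
    have "\<forall>i<n. \<exists>r s. Phi k i r s" using conjunct2[OF Q[of k]] unfolding Phi_def .
    then obtain r s where "Phi k i r s" using True by blast
    then show ?thesis by (intro exI[of _ "(r, s)"]) simp
  qed simp
  have "\<forall>k. \<exists>F. \<forall>i. i < n \<longrightarrow> Phi k i (fst (F i)) (snd (F i))"
    by (intro allI choice) (rule step)
  from choice[OF this] obtain FF where FF: "\<forall>k i. i < n \<longrightarrow> Phi k i (fst (FF k i)) (snd (FF k i))"
    by (elim exE)
  define R where "R k i = fst (FF k i)" for k i
  define S where "S k i = snd (FF k i)" for k i
  have RS: "\<And>k i. i < n \<Longrightarrow> (\<forall>j<n. Q k j \<le> R k i j \<and> R k i j \<le> Q k j + 1) \<and>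
      (\<forall>j<n. Q k j \<le> S k i j \<and> S k i j \<le> Q k j + 1) \<and> l (g (Suc k) (R k i)) i \<noteq> l (g (Suc k) (S k i)) i"
    using FF unfolding R_def S_def Phi_def by blast
  define z where "z k = g (Suc k) (Q k)" for k
  have zc: "z k \<in> cube n" for k
  proof -
    have "\<forall>i<n. Q k i \<le> Suc k" using Q[of k] by (simp add: less_imp_le)
    then show ?thesis using g_cube[of "Q k" "Suc k"] by (simp add: z_def)
  qed
  have "\<bar>z k i\<bar> \<le> 1" for k i
    using zc[of k] by (cases "i < n") (auto simp: cube_def)
  then obtain \<sigma> where sig: "strict_mono \<sigma>" "\<forall>i<n. convergent (\<lambda>k. z (\<sigma> k) i)"
    using bw_finite by blast
  define zz where "zz j = (if j < n then lim (\<lambda>k. z (\<sigma> k) j) else 0)" for j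
  have zlim: "(\<lambda>k. z (\<sigma> k) j) \<longlonglongrightarrow> zz j" for j
  proof (cases "j < n")
    case True then show ?thesis using sig(2) by (simp add: zz_def convergent_LIMSEQ_iff)
  next
    case False then have "z (\<sigma> k) j = 0" for k using zc[of "\<sigma> k"] by (auto simp: cube_def)
    then show ?thesis using False by (simp add: zz_def)
  qed
  have zzc: "zz \<in> cube n"
  proof -
    have "0 \<le> zz i \<and> zz i \<le> 1" if "i < n" for i
      using zc that LIMSEQ_le_const[OF zlim[of i]] LIMSEQ_le_const2[OF zlim[of i]]
      by (auto simp: cube_def)
    then show ?thesis by (auto simp: cube_def zz_def)
  qed
  have inv0: "(\<lambda>k. 1 / real (Suc (\<sigma> k))) \<longlonglongrightarrow> 0"
    using LIMSEQ_subseq_LIMSEQ[OF LIMSEQ_inverse_real_of_nat sig(1)]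
    by (simp add: o_def inverse_eq_divide)
  have near: "(\<lambda>k. g (Suc (\<sigma> k)) (T k) j) \<longlonglongrightarrow> zz j"
    if T: "\<And>k j. j < n \<Longrightarrow> Q (\<sigma> k) j \<le> T k j \<and> T k j \<le> Q (\<sigma> k) j + 1" for T j
  proof (cases "j < n")
    case False then show ?thesis by (simp add: g_def zz_def)
  next
    case True
    have bd: "\<bar>g (Suc (\<sigma> k)) (T k) j - z (\<sigma> k) j\<bar> \<le> 1 / real (Suc (\<sigma> k))" for k
    proof -
      have e: "g (Suc (\<sigma> k)) (T k) j - z (\<sigma> k) j = (real (T k j) - real (Q (\<sigma> k) j)) / real (Suc (\<sigma> k))"
        by (simp add: g_def z_def True diff_divide_distrib del: of_nat_Suc)
      have "0 \<le> real (T k j) - real (Q (\<sigma> k) j)" "real (T k j) - real (Q (\<sigma> k) j) \<le> 1"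
        using T[OF True, of k] by auto
      then show ?thesis unfolding e by (simp add: divide_right_mono del: of_nat_Suc)
    qed
    have "(\<lambda>k. g (Suc (\<sigma> k)) (T k) j - z (\<sigma> k) j) \<longlonglongrightarrow> 0"
      by (rule Lim_null_comparison[OF _ inv0]) (use bd in auto)
    from tendsto_add[OF this zlim[of j]] show ?thesis by simp
  qed
  have fix_i: "F zz i = zz i" if i: "i < n" for i
  proof -
    define rr where "rr k = g (Suc (\<sigma> k)) (R (\<sigma> k) i)" for k
    define ss where "ss k = g (Suc (\<sigma> k)) (S (\<sigma> k) i)" for k
    have Rb: "Q (\<sigma> k) j \<le> R (\<sigma> k) i j \<and> R (\<sigma> k) i j \<le> Q (\<sigma> k) j + 1" if "j < n" for k j
      using RS[OF i, of "\<sigma> k"] that by blast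
    have Sb: "Q (\<sigma> k) j \<le> S (\<sigma> k) i j \<and> S (\<sigma> k) i j \<le> Q (\<sigma> k) j + 1" if "j < n" for k j
      using RS[OF i, of "\<sigma> k"] that by blast
    have rrj: "(\<lambda>k. rr k j) \<longlonglongrightarrow> zz j" for j
      unfolding rr_def by (rule near[of "\<lambda>k. R (\<sigma> k) i"]) (rule Rb)
    have ssj: "(\<lambda>k. ss k j) \<longlonglongrightarrow> zz j" for j
      unfolding ss_def by (rule near[of "\<lambda>k. S (\<sigma> k) i"]) (rule Sb)
    have rrl: "rr \<longlonglongrightarrow> zz" by (rule tendsto_fun_coord) (rule rrj)
    have ssl: "ss \<longlonglongrightarrow> zz" by (rule tendsto_fun_coord) (rule ssj)
    have Qle: "Q (\<sigma> k) j \<le> \<sigma> k" if "j < n" for k j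
      using conjunct1[OF Q[of "\<sigma> k"]] that by (simp add: less_Suc_eq_le)
    have rrc: "rr k \<in> cube n" for k
    proof -
      have "\<forall>j<n. R (\<sigma> k) i j \<le> Suc (\<sigma> k)" using Rb Qle by (metis add_le_mono1 order_trans Suc_eq_plus1)
      then show ?thesis unfolding rr_def by (rule g_cube) simp
    qed
    have ssc: "ss k \<in> cube n" for k
    proof -
      have "\<forall>j<n. S (\<sigma> k) i j \<le> Suc (\<sigma> k)" using Sb Qle by (metis add_le_mono1 order_trans Suc_eq_plus1)
      then show ?thesis unfolding ss_def by (rule g_cube) simp
    qed
    have Frr: "(\<lambda>k. F (rr k) i) \<longlonglongrightarrow> F zz i"
      using continuous_on_tendsto_compose[OF cont[OF i] rrl zzc] rrc by simp
    have Fss: "(\<lambda>k. F (ss k) i) \<longlonglongrightarrow> F zz i"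
      using continuous_on_tendsto_compose[OF cont[OF i] ssl zzc] ssc by simp
    have lab: "(rr k i - F (rr k) i) * (ss k i - F (ss k) i) \<le> 0" for k
    proof -
      have ne: "l (rr k) i \<noteq> l (ss k) i" using RS[OF i, of "\<sigma> k"] unfolding rr_def ss_def by blast
      have "l (rr k) i \<le> 1" "l (ss k) i \<le> 1" using l1 by blast+
      then consider "l (rr k) i = 0" "l (ss k) i = 1" | "l (rr k) i = 1" "l (ss k) i = 0" using ne by linarith
      then show ?thesis
      proof cases
        case 1
        then have "rr k i \<le> F (rr k) i" "F (ss k) i \<le> ss k i" using l4 l5 rrc ssc i by blast+
        then show ?thesis by (simp add: mult_nonpos_nonneg)
      next
        case 2
        then have "F (rr k) i \<le> rr k i" "ss k i \<le> F (ss k) i" using l4 l5 rrc ssc i by blast+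
        then show ?thesis by (simp add: mult_nonneg_nonpos)
      qed
    qed
    have "(\<lambda>k. (rr k i - F (rr k) i) * (ss k i - F (ss k) i)) \<longlonglongrightarrow> (zz i - F zz i) * (zz i - F zz i)"
      by (intro tendsto_intros rrj ssj Frr Fss)
    then have "(zz i - F zz i) * (zz i - F zz i) \<le> 0"
      using lab by (intro LIMSEQ_le_const2) auto
    moreover have "0 \<le> (zz i - F zz i) * (zz i - F zz i)" by simp
    ultimately have "(zz i - F zz i) * (zz i - F zz i) = 0" by linarith
    then show ?thesis by simp
  qed
  have "F zz = zz"
  proof
    fix i show "F zz i = zz i"
    proof (cases "i < n")
      case True then show ?thesis by (rule fix_i)
    next
      case False then show ?thesis using into[OF zzc] zzc by (simp add: cube_def)
    qed
  qed
  then show ?thesis using zzc by blast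
qed


lemma cont_sum_list_map:
  fixes f :: "'k \<Rightarrow> (nat \<Rightarrow> real) \<Rightarrow> real"
  assumes "\<And>k. k \<in> set cs \<Longrightarrow> continuous_on S (f k)"
  shows "continuous_on S (\<lambda>x. sum_list (map (\<lambda>k. f k x) cs))"
  using assms by (induction cs) (auto intro!: continuous_on_add)

lemma cont_if_const:
  fixes f :: "(nat \<Rightarrow> real) \<Rightarrow> real"
  shows "continuous_on S f \<Longrightarrow> continuous_on S (\<lambda>x. if c then f x else 0)"
  by (cases c) (simp_all add: continuous_on_const)

lemma cont_clamp:
  fixes a L t :: "(nat \<Rightarrow> real) \<Rightarrow> real"
  assumes ca: "continuous_on S a" and cL: "continuous_on S L" and ct: "continuous_on S t"
    and b: "\<And>x. x \<in> S \<Longrightarrow> 0 \<le> a x \<and> a x \<le> L x"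
  shows "continuous_on S (\<lambda>x. if L x = 0 then 0 else a x * min 1 (max 0 (t x / L x)))"
  unfolding continuous_on_def
proof
  fix x0 assume x0: "x0 \<in> S"
  let ?f = "\<lambda>x. if L x = 0 then 0 else a x * min 1 (max 0 (t x / L x))"
  have Lt: "(L \<longlongrightarrow> L x0) (at x0 within S)" using cL x0 by (simp add: continuous_on_def)
  have at: "(a \<longlongrightarrow> a x0) (at x0 within S)" using ca x0 by (simp add: continuous_on_def)
  have tt: "(t \<longlongrightarrow> t x0) (at x0 within S)" using ct x0 by (simp add: continuous_on_def)
  have evS: "eventually (\<lambda>x. x \<in> S) (at x0 within S)"
    by (simp add: eventually_at_filter)
  show "(?f \<longlongrightarrow> ?f x0) (at x0 within S)"
  proof (cases "L x0 = 0")
    case True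
    have "(?f \<longlongrightarrow> 0) (at x0 within S)"
    proof (rule Lim_null_comparison)
      show "eventually (\<lambda>x. norm (?f x) \<le> L x) (at x0 within S)"
      proof (rule eventually_mono[OF evS])
        fix x assume "x \<in> S"
        then have "0 \<le> a x" "a x \<le> L x" using b by auto
        moreover have "0 \<le> min 1 (max 0 (t x / L x))" "min 1 (max 0 (t x / L x)) \<le> 1" by auto
        ultimately have "\<bar>a x * min 1 (max 0 (t x / L x))\<bar> \<le> L x"
          by (smt (verit, best) mult_left_le mult_nonneg_nonneg)
        then show "norm (?f x) \<le> L x" using \<open>0 \<le> a x\<close> \<open>a x \<le> L x\<close> by auto
      qed
      show "(L \<longlongrightarrow> 0) (at x0 within S)" using Lt True by simp
    qed
    then show ?thesis using True by simp
  next
    case False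
    then have pos: "L x0 > 0" using b[OF x0] by linarith
    have evp: "eventually (\<lambda>x. L x > 0) (at x0 within S)"
      using order_tendstoD(1)[OF Lt pos] .
    have "((\<lambda>x. a x * min 1 (max 0 (t x / L x))) \<longlongrightarrow> a x0 * min 1 (max 0 (t x0 / L x0))) (at x0 within S)"
      using False by (intro tendsto_intros at tt Lt)
    then have "((\<lambda>x. a x * min 1 (max 0 (t x / L x))) \<longlongrightarrow> ?f x0) (at x0 within S)"
      using False by simp
    then show ?thesis
      by (rule Lim_transform_eventually) (rule eventually_mono[OF evp], simp)
  qed
qed


definition refs :: "'b contract list \<Rightarrow> 'b set" where
  "refs cs = {w. \<exists>u v c p. CDS u v w c p \<in> set cs}"

definition Wt :: "'b contract list \<Rightarrow> 'b \<Rightarrow> real" where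
  "Wt cs v = sum_list (map (\<lambda>k. if debtor k = v then cweight k else 0) cs)"

definition payx :: "'b contract list \<Rightarrow> ('b \<Rightarrow> real) \<Rightarrow> ('b \<Rightarrow> real) \<Rightarrow> 'b contract \<Rightarrow> real" where
  "payx cs r X k =
     (let v = debtor k; \<rho> = prio k; L = bank_liab_prio cs v \<rho> r in
      if L = 0 then 0
      else liab k r * min 1 (max 0 ((X v - bank_liab_upto cs v (\<rho> - 1) r) / L)))"

definition assetsx :: "('b \<Rightarrow> real) \<Rightarrow> 'b contract list \<Rightarrow> ('b \<Rightarrow> real) \<Rightarrow> ('b \<Rightarrow> real) \<Rightarrow> 'b \<Rightarrow> real" where
  "assetsx e cs r X v = e v + sum_list (map (\<lambda>k. if creditor k = v then payx cs r X k else 0) cs)"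

lemma payment_payx: "payment cs k r = payx cs r (\<lambda>v. r v * bank_liab cs v r) k"
  by (simp add: payment_def payx_def Let_def)

lemma assets_assetsx: "assets e cs v r = assetsx e cs r (\<lambda>v. r v * bank_liab cs v r) v"
  unfolding assets_def assetsx_def payment_payx ..

lemma bank_liab_cong:
  assumes "\<And>k. k \<in> set cs \<Longrightarrow> liab k r = liab k r'"
  shows "bank_liab cs v r = bank_liab cs v r'"
    "bank_liab_prio cs v \<rho> r = bank_liab_prio cs v \<rho> r'"
    "bank_liab_upto cs v \<rho> r = bank_liab_upto cs v \<rho> r'"
proof -
  show "bank_liab cs v r = bank_liab cs v r'"
    unfolding bank_liab_def by (rule arg_cong[where f=sum_list], rule map_cong) (auto simp: assms)
  show P: "bank_liab_prio cs v \<rho> r = bank_liab_prio cs v \<rho> r'" for \<rho>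
    unfolding bank_liab_prio_def by (rule arg_cong[where f=sum_list], rule map_cong) (auto simp: assms)
  show "bank_liab_upto cs v \<rho> r = bank_liab_upto cs v \<rho> r'"
    unfolding bank_liab_upto_def using P by simp
qed

lemma assetsx_cong:
  assumes "\<And>k. k \<in> set cs \<Longrightarrow> liab k r = liab k r'"
    and "\<And>k. k \<in> set cs \<Longrightarrow> X (debtor k) = X' (debtor k)"
  shows "assetsx e cs r X v = assetsx e cs r' X' v"
proof -
  have "payx cs r X k = payx cs r' X' k" if "k \<in> set cs" for k
    using assms(1)[OF that] assms(2)[OF that] bank_liab_cong[OF assms(1)]
    by (simp add: payx_def Let_def)
  then have "map (\<lambda>k. if creditor k = v then payx cs r X k else 0) cs = map (\<lambda>k. if creditor k = v then payx cs r' X' k else 0) cs"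
    by (intro map_cong) auto
  then show ?thesis unfolding assetsx_def by (rule arg_cong[where f="\<lambda>xs. e v + sum_list xs"])
qed

lemma le_sum_list_nonneg:
  fixes xs :: "real list"
  assumes "x \<in> set xs" "\<And>y. y \<in> set xs \<Longrightarrow> 0 \<le> y"
  shows "x \<le> sum_list xs"
  using assms
proof (induction xs)
  case (Cons a xs)
  then show ?case
    using sum_list_nonneg[of xs] by (cases "x = a") (auto intro: add_nonneg_nonneg add_increasing)
qed simp

locale fsys =
  fixes V :: "'b set" and e :: "'b \<Rightarrow> real" and P :: nat and cs :: "'b contract list"
  assumes wf: "wf_system V e P cs"
begin

lemma finV: "finite V" and e_nn: "\<And>v. v \<in> V \<Longrightarrow> e v \<ge> 0"
  and cdat: "\<And>k. k \<in> set cs \<Longrightarrow> debtor k \<in> V \<and> creditor k \<in> V \<and> cweight k > 0"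
  and cds: "\<And>u v w c p. CDS u v w c p \<in> set cs \<Longrightarrow> w \<in> V \<and> (\<exists>v' c' p'. Debt w v' c' p' \<in> set cs \<and> c' > 0)"
  using wf unfolding wf_system_def by blast+

lemma refs_V: "refs cs \<subseteq> V"
  using cds unfolding refs_def by blast

definition good :: "('b \<Rightarrow> real) \<Rightarrow> bool" where
  "good r \<longleftrightarrow> (\<forall>w\<in>refs cs. 0 \<le> r w \<and> r w \<le> 1)"

lemma liab_bounds:
  assumes "good r" "k \<in> set cs"
  shows "0 \<le> liab k r \<and> liab k r \<le> cweight k"
proof (cases k)
  case (CDS u v w c p)
  then have "w \<in> refs cs" using assms(2) unfolding refs_def by blast
  then have "0 \<le> r w" "r w \<le> 1" using assms(1) unfolding good_def by auto
  moreover have "c > 0" using cdat[OF assms(2)] CDS by simp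
  ultimately have "0 \<le> c * (1 - r w)" "c * (1 - r w) \<le> c * 1"
    by (simp_all add: mult_left_mono)
  then show ?thesis using CDS by simp
next
  case (Debt u v c p)
  then show ?thesis using cdat[OF assms(2)] by simp
qed

lemma liab_cong:
  assumes "\<And>w. w \<in> refs cs \<Longrightarrow> r w = r' w" "k \<in> set cs"
  shows "liab k r = liab k r'"
proof (cases k)
  case (CDS u v w c p)
  then have "w \<in> refs cs" using assms(2) unfolding refs_def by blast
  then show ?thesis using assms(1) CDS by simp
qed simp

lemma bank_liab_nn: "good r \<Longrightarrow> 0 \<le> bank_liab cs v r"
  unfolding bank_liab_def by (rule sum_list_nonneg) (auto simp: liab_bounds)

lemma bank_liab_le_Wt: "good r \<Longrightarrow> bank_liab cs v r \<le> Wt cs v"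
  unfolding bank_liab_def Wt_def by (rule sum_list_mono) (auto simp: liab_bounds)

lemma liab_le_prio:
  assumes "good r" "k \<in> set cs"
  shows "liab k r \<le> bank_liab_prio cs (debtor k) (prio k) r"
  unfolding bank_liab_prio_def
proof (rule le_sum_list_nonneg)
  show "liab k r \<in> set (map (\<lambda>k'. if debtor k' = debtor k \<and> prio k' = prio k then liab k' r else 0) cs)"
    unfolding set_map by (rule rev_image_eqI[OF assms(2)]) simp
qed (use assms liab_bounds in auto)

lemma refs_pos:
  assumes "good r" "w \<in> refs cs"
  shows "0 < bank_liab cs w r"
proof -
  obtain u v c p where "CDS u v w c p \<in> set cs" using assms(2) unfolding refs_def by blast
  then obtain v' c' p' where d: "Debt w v' c' p' \<in> set cs" "c' > 0" using cds by blast
  have "c' \<le> bank_liab cs w r"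
    unfolding bank_liab_def
  proof (rule le_sum_list_nonneg)
    show "c' \<in> set (map (\<lambda>k. if debtor k = w then liab k r else 0) cs)"
      unfolding set_map by (rule rev_image_eqI[OF d(1)]) simp
  qed (use assms liab_bounds in auto)
  then show ?thesis using d by linarith
qed

lemma payx_nn: "good r \<Longrightarrow> k \<in> set cs \<Longrightarrow> 0 \<le> payx cs r X k"
  unfolding payx_def Let_def using liab_bounds by simp

lemma assetsx_nn: "good r \<Longrightarrow> v \<in> V \<Longrightarrow> 0 \<le> assetsx e cs r X v"
  unfolding assetsx_def using e_nn payx_nn
  by (intro add_nonneg_nonneg sum_list_nonneg) auto


lemma exists_solution: "\<exists>r. is_solution V e cs r"
proof -
  define n where "n = card V"
  obtain h where h: "bij_betw h {0..<n} V" using ex_bij_betw_nat_finite[OF finV] n_def by blast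
  define idx where "idx = inv_into {0..<n} h"
  have hV: "h j \<in> V" if "j < n" for j using h that by (auto simp: bij_betw_def)
  have idxn: "idx v < n" if "v \<in> V" for v
    using h that unfolding idx_def bij_betw_def by (metis atLeastLessThan_iff inv_into_into)
  have hidx: "h (idx v) = v" if "v \<in> V" for v
    using h that unfolding idx_def bij_betw_def by (simp add: f_inv_into_f)
  define R where "R = refs cs"
  have RV: "R \<subseteq> V" using refs_V R_def by simp
  define rv where "rv x = (\<lambda>v. x (idx v))" for x :: "nat \<Rightarrow> real"
  define X where "X x = (\<lambda>v. if v \<in> R then x (idx v) * bank_liab cs v (rv x) else x (idx v) * Wt cs v)" for x
  define A where "A x v = assetsx e cs (rv x) (X x) v" for x v
  define Phi where "Phi x v = (if v \<in> R then min 1 (A x v / bank_liab cs v (rv x))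
     else if Wt cs v = 0 then 0 else min (A x v) (bank_liab cs v (rv x)) / Wt cs v)" for x v
  define F where "F x = (\<lambda>j. if j < n then Phi x (h j) else 0)" for x
  have goodc: "good (rv x)" if "x \<in> cube n" for x
    using that RV idxn unfolding good_def R_def rv_def cube_def by blast
  have Phi_b: "0 \<le> Phi x v \<and> Phi x v \<le> 1" if "x \<in> cube n" "v \<in> V" for x v
  proof -
    have g: "good (rv x)" using goodc that by blast
    have A0: "0 \<le> A x v" unfolding A_def using assetsx_nn[OF g that(2)] .
    have l0: "0 \<le> bank_liab cs v (rv x)" using bank_liab_nn[OF g] .
    have lW: "bank_liab cs v (rv x) \<le> Wt cs v" using bank_liab_le_Wt[OF g] .
    show ?thesis
    proof (cases "v \<in> R")
      case True
      then have "0 < bank_liab cs v (rv x)" using refs_pos[OF g] R_def by simp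
      then show ?thesis using True A0 by (simp add: Phi_def)
    next
      case False
      show ?thesis
      proof (cases "Wt cs v = 0")
        case False
        then have Wp: "Wt cs v > 0" using l0 lW by linarith
        have "min (A x v) (bank_liab cs v (rv x)) \<le> Wt cs v" using lW by linarith
        moreover have "0 \<le> min (A x v) (bank_liab cs v (rv x))" using A0 l0 by simp
        ultimately show ?thesis using \<open>v \<notin> R\<close> False Wp by (simp add: Phi_def divide_le_eq_1)
      qed (use False in \<open>simp add: Phi_def\<close>)
    qed
  qed
  have into: "F x \<in> cube n" if "x \<in> cube n" for x
    using Phi_b[OF that] hV unfolding cube_def F_def by auto
  have cx: "continuous_on (cube n) (\<lambda>x. x j)" for j
    by (rule continuous_on_subset[OF continuous_on_product_coordinates]) simp
  have cliab: "continuous_on (cube n) (\<lambda>x. liab k (rv x))" for k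
  proof (cases k)
    case (CDS u v w c p)
    then show ?thesis unfolding rv_def by (simp, intro continuous_intros cx)
  qed (simp add: continuous_on_const)
  have cbl: "continuous_on (cube n) (\<lambda>x. bank_liab cs v (rv x))" for v
    unfolding bank_liab_def
    by (rule cont_sum_list_map[of cs "cube n" "\<lambda>k x. if debtor k = v then liab k (rv x) else 0"])
       (intro cont_if_const cliab)
  have cblp: "continuous_on (cube n) (\<lambda>x. bank_liab_prio cs v \<rho> (rv x))" for v \<rho>
    unfolding bank_liab_prio_def
    by (rule cont_sum_list_map[of cs "cube n" "\<lambda>k x. if debtor k = v \<and> prio k = \<rho> then liab k (rv x) else 0"])
       (intro cont_if_const cliab)
  have cblu: "continuous_on (cube n) (\<lambda>x. bank_liab_upto cs v \<rho> (rv x))" for v \<rho>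
    unfolding bank_liab_upto_def by (intro continuous_on_sum cblp)
  have cX: "continuous_on (cube n) (\<lambda>x. X x v)" for v
    unfolding X_def rv_def[symmetric]
    by (cases "v \<in> R") (simp_all, (intro continuous_intros cx cbl)+)
  have cpay: "continuous_on (cube n) (\<lambda>x. payx cs (rv x) (X x) k)" if k: "k \<in> set cs" for k
    unfolding payx_def Let_def
  proof (rule cont_clamp[OF cliab cblp])
    show "continuous_on (cube n) (\<lambda>x. X x (debtor k) - bank_liab_upto cs (debtor k) (prio k - 1) (rv x))"
      by (intro continuous_intros cX cblu)
    fix x assume "x \<in> cube n"
    then have "good (rv x)" by (rule goodc)
    then show "0 \<le> liab k (rv x) \<and> liab k (rv x) \<le> bank_liab_prio cs (debtor k) (prio k) (rv x)"
      using liab_bounds liab_le_prio k by blast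
  qed
  have cA: "continuous_on (cube n) (\<lambda>x. A x v)" for v
    unfolding A_def assetsx_def
    by (intro continuous_on_add continuous_on_const
        cont_sum_list_map[of cs "cube n" "\<lambda>k x. if creditor k = v then payx cs (rv x) (X x) k else 0"])
       (intro cont_if_const cpay, assumption)
  have cPhi: "continuous_on (cube n) (\<lambda>x. Phi x v)" if "v \<in> V" for v
  proof (cases "v \<in> R")
    case True
    have "bank_liab cs v (rv x) \<noteq> 0" if "x \<in> cube n" for x
    proof -
      have "v \<in> refs cs" using True R_def by simp
      then show ?thesis using refs_pos[OF goodc[OF that]] by force
    qed
    then show ?thesis using True unfolding Phi_def
      by (simp, intro continuous_on_min continuous_on_const continuous_on_divide cA cbl) auto
  next
    case False
    then show ?thesis unfolding Phi_def
      by (cases "Wt cs v = 0") (simp_all add: continuous_on_const, intro continuous_on_divide continuous_on_min cA cbl continuous_on_const, simp)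
  qed
  have cont: "continuous_on (cube n) (\<lambda>x. F x i)" if "i < n" for i
    using cPhi[OF hV[OF that]] that by (simp add: F_def)
  obtain x where x: "x \<in> cube n" "F x = x" using brouwer_nat[of n F] cont into by blast
  have g: "good (rv x)" using goodc[OF x(1)] .
  define l where "l v = bank_liab cs v (rv x)" for v
  define r where "r v = (if v \<in> R then x (idx v) else if l v > 0 then X x v / l v else 1)" for v
  have agree: "r w = rv x w" if "w \<in> refs cs" for w using that by (simp add: r_def rv_def R_def)
  have liabeq: "liab k r = liab k (rv x)" if "k \<in> set cs" for k
    by (rule liab_cong[OF agree that])
  have bleq: "bank_liab cs v r = l v" for v
    unfolding l_def by (rule bank_liab_cong(1)[OF liabeq])
  have fp: "x (idx v) = Phi x v" if "v \<in> V" for v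
  proof -
    have "F x (idx v) = x (idx v)" using x(2) by simp
    then show ?thesis using idxn[OF that] hidx[OF that] by (simp add: F_def)
  qed
  have l0: "0 \<le> l v" for v unfolding l_def using bank_liab_nn[OF g] .
  have lW: "l v \<le> Wt cs v" for v unfolding l_def using bank_liab_le_Wt[OF g] .
  have A0: "0 \<le> A x v" if "v \<in> V" for v unfolding A_def using assetsx_nn[OF g that] .
  have lR: "0 < l v" if "v \<in> R" for v unfolding l_def using refs_pos[OF g] that R_def by simp
  have rl: "r v * l v = X x v" if "v \<in> V" for v
  proof (cases "v \<in> R")
    case True then show ?thesis by (simp add: r_def X_def l_def)
  next
    case False
    show ?thesis
    proof (cases "l v > 0")
      case True then show ?thesis using False by (simp add: r_def)
    next
      case c2: False
      then have "l v = 0" using l0[of v] by linarith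
      then have "Phi x v = 0" using False A0[OF that] by (simp add: Phi_def l_def)
      then have "x (idx v) = 0" using fp[OF that] by simp
      then show ?thesis using False \<open>l v = 0\<close> by (simp add: X_def)
    qed
  qed
  have asq: "assets e cs v r = A x v" for v
  proof -
    have "assets e cs v r = assetsx e cs r (\<lambda>v. r v * bank_liab cs v r) v" by (rule assets_assetsx)
    also have "\<dots> = assetsx e cs (rv x) (X x) v"
    proof (rule assetsx_cong[OF liabeq])
      fix k assume "k \<in> set cs"
      then have "debtor k \<in> V" using cdat by blast
      then show "r (debtor k) * bank_liab cs (debtor k) r = X x (debtor k)" using rl bleq by simp
    qed
    finally show ?thesis by (simp add: A_def)
  qed
  have sol: "(0 \<le> r v \<and> r v \<le> 1) \<and> (assets e cs v r \<ge> bank_liab cs v r \<longrightarrow> r v = 1) \<and>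
       (assets e cs v r < bank_liab cs v r \<longrightarrow> r v = assets e cs v r / bank_liab cs v r)" if v: "v \<in> V" for v
    unfolding asq bleq
  proof (cases "v \<in> R")
    case True
    have rv: "r v = min 1 (A x v / l v)" using fp[OF v] True by (simp add: r_def Phi_def l_def)
    have lp: "0 < l v" using lR True by simp
    show "(0 \<le> r v \<and> r v \<le> 1) \<and> (l v \<le> A x v \<longrightarrow> r v = 1) \<and> (A x v < l v \<longrightarrow> r v = A x v / l v)"
      using lp A0[OF v] unfolding rv by (auto simp: le_divide_eq_1 divide_less_eq_1)
  next
    case False
    show "(0 \<le> r v \<and> r v \<le> 1) \<and> (l v \<le> A x v \<longrightarrow> r v = 1) \<and> (A x v < l v \<longrightarrow> r v = A x v / l v)"
    proof (cases "l v > 0")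
      case True
      have Wp: "Wt cs v > 0" using True lW[of v] by linarith
      have xv: "x (idx v) = min (A x v) (l v) / Wt cs v" using fp[OF v] False Wp by (simp add: Phi_def l_def)
      have rv: "r v = min (A x v) (l v) / l v" using True False Wp xv by (simp add: r_def X_def)
      show ?thesis using True A0[OF v] unfolding rv by (auto simp: divide_le_eq_1 min_def)
    next
      case c2: False
      then have "l v = 0" using l0[of v] by linarith
      then show ?thesis using False A0[OF v] by (simp add: r_def)
    qed
  qed
  show ?thesis unfolding is_solution_def using sol by blast
qed
end


theorem mainTheorem1:
  fixes V :: "'b set" and e :: "'b \<Rightarrow> real" and P :: nat and cs :: "'b contract list"
  assumes "wf_system V e P cs"
  shows "\<exists>r. is_solution V e cs r"
  using fsys.exists_solution[OF fsys.intro[OF assms]] .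

end
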